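(* Let $m,m',\ell\in\mathbb{N}$. Let $x\in\mathbb{R}^m$ and $x'\in\mathbb{R}^{m'}$ be two time series with $\mathrm{set}(x)=\mathrm{set}(x')$ and with the same set of $\ell$-profiles, i.e. $D_{(x,\ell)}=D_{(x',\ell)}$. Then for every $y\in\mathbb{R}^\ell$ we have $d_{dF}(x,y)=d_{dF}(x',y)$.
   Context: A time series of complexity $m$ is a vector $x=(x_1,\dots,x_m)\in\mathbb{R}^m$; $\mathrm{set}(x)=\{x_i: 1\le i\le m\}$, and for $z\in\mathrm{set}(x)$, $\mathrm{rank}_x(z)$ is the rank of $z$ in $\mathrm{set}(x)$ (ordered increasingly). For $x\in\mathbb{R}^m$ and $y\in\mathbb{R}^\ell$, a traversal is a sequence of index pairs $(i,j)\in[m]\times[\ell]$ starting at $(1,1)$, ending at $(m,\ell)$, in which each pair $(i,j)$ is followed by one of $(i,j+1)$, $(i+1,j)$, $(i+1,j+1)$; $x_i$ and $y_j$ are matched if $(i,j)$ occurs in it. The discrete Fréchet distance $d_{dF}(x,y)$ is the minimum over all traversals $T$ of $\max_{(i,j)\in T}|x_i-y_j|$. For a traversal $M$ of $x$ with a time series of complexity $\ell$, the traversal sectors are $S^{(x,M)}_j=\{x_i: i\in[m],\ x_i \text{ and } y_j \text{ matched by } M\}$ for $j\in[\ell]$, and the $\ell$-profile of $(x,M)$ is the sequence $\big((\mathrm{rank}_x(\min S^{(x,M)}_1),\mathrm{rank}_x(\max S^{(x,M)}_1)),\dots,(\mathrm{rank}_x(\min S^{(x,M)}_\ell),\mathrm{rank}_x(\max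 S^{(x,M)}_\ell))\big)$. $D_{(x,\ell)}$ denotes the set of all $\ell$-profiles of $(x,M)$ over all traversals $M$ between time series of complexity $m$ and time series of complexity $\ell$. *)

theory Defs
  imports Complex_Main
begin

text \<open>Time series are lists of reals; positions are 0-based (paper index i corresponds
to list position i-1).\<close>

definition traversal :: "nat \<Rightarrow> nat \<Rightarrow> (nat \<times> nat) list \<Rightarrow> bool" where
  "traversal m l T \<longleftrightarrow>
     T \<noteq> [] \<and> hd T = (0, 0) \<and> last T = (m - 1, l - 1) \<and>
     (\<forall>(i, j) \<in> set T. i < m \<and> j < l) \<and>
     (\<forall>k. Suc k < length T \<longrightarrow>
        (let (i, j) = T ! k; p = T ! Suc k in
           p = (i, Suc j) \<or> p = (Suc i, j) \<or> p = (Suc i, Suc j)))"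

definition dF :: "real list \<Rightarrow> real list \<Rightarrow> real" where
  "dF x y = Min {Max ((\<lambda>(i, j). \<bar>x ! i - y ! j\<bar>) ` set T) | T.
                  traversal (length x) (length y) T}"

definition rank :: "real list \<Rightarrow> real \<Rightarrow> nat" where
  "rank x z = card {w \<in> set x. w \<le> z}"

definition sector :: "real list \<Rightarrow> (nat \<times> nat) list \<Rightarrow> nat \<Rightarrow> real set" where
  "sector x M j = {x ! i | i. (i, j) \<in> set M}"

definition profile :: "real list \<Rightarrow> nat \<Rightarrow> (nat \<times> nat) list \<Rightarrow> (nat \<times> nat) list" where
  "profile x l M = map (\<lambda>j. (rank x (Min (sector x M j)), rank x (Max (sector x M j)))) [0..<l]"

definition profiles :: "real list \<Rightarrow> nat \<Rightarrow> (nat \<times> nat) list set" where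
  "profiles x l = {profile x l M | M. traversal (length x) l M}"

end

theory Submission
  imports Defs
begin

lemma cover:
  "T \<noteq> [] \<Longrightarrow> (\<forall>k. Suc k < length T \<longrightarrow> snd (T ! Suc k) \<le> Suc (snd (T!k)))
   \<Longrightarrow> snd (hd T) \<le> j \<Longrightarrow> j \<le> snd (last T) \<Longrightarrow> \<exists>i. (i,j) \<in> set T"
proof (induction T)
  case Nil then show ?case by simp
next
  case (Cons a T')
  show ?case
  proof (cases "snd a = j")
    case True then show ?thesis by (metis list.set_intros(1) prod.collapse)
  next
    case False
    then have lt: "snd a < j" using Cons.prems(3) by simp
    have ne: "T' \<noteq> []" using Cons.prems(4) lt by auto
    have st: "\<forall>k. Suc k < length T' \<longrightarrow> snd (T' ! Suc k) \<le> Suc (snd (T'!k))"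
      using Cons.prems(2) by (metis Suc_less_eq length_Cons nth_Cons_Suc)
    have "snd (T' ! 0) \<le> Suc (snd a)" using Cons.prems(2)[rule_format, of 0] ne by simp
    then have "snd (hd T') \<le> j" using lt ne by (simp add: hd_conv_nth)
    moreover have "j \<le> snd (last T')" using Cons.prems(4) ne by simp
    ultimately show ?thesis using Cons.IH[OF ne st] by auto
  qed
qed

lemma trav_step:
  assumes "traversal m l T" "Suc k < length T"
  shows "snd (T ! Suc k) \<le> Suc (snd (T!k))"
proof -
  obtain i j where e: "T ! k = (i,j)" by fastforce
  have "T ! Suc k = (i, Suc j) \<or> T ! Suc k = (Suc i, j) \<or> T ! Suc k = (Suc i, Suc j)"
    using assms unfolding traversal_def using e by (auto simp: Let_def)
  then show ?thesis using e by auto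
qed

lemma trav_cover:
  assumes "traversal m l T" "j < l"
  shows "\<exists>i. (i,j) \<in> set T"
proof -
  have "T \<noteq> []" "snd (hd T) = 0" "snd (last T) = l - 1"
    using assms unfolding traversal_def by auto
  then show ?thesis using cover[of T j] trav_step[OF assms(1)] assms(2) by auto
qed

lemma trav_bounds:
  assumes "traversal m l T" "(i,j) \<in> set T"
  shows "i < m" "j < l"
  using assms unfolding traversal_def by auto

lemma sector_props:
  assumes "traversal (length x) l T" "j < l"
  shows "finite (sector x T j)" "sector x T j \<noteq> {}" "sector x T j \<subseteq> set x"
proof -
  have "sector x T j = (\<lambda>p. x ! fst p) ` {p \<in> set T. snd p = j}"
    unfolding sector_def by force
  then show "finite (sector x T j)" by simp
  show "sector x T j \<noteq> {}" using trav_cover[OF assms] unfolding sector_def by blast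
  show "sector x T j \<subseteq> set x" unfolding sector_def using trav_bounds[OF assms(1)] by auto
qed

lemma Max_eq_dom:
  fixes A B :: "real set"
  assumes "finite A" "finite B" "A \<noteq> {}" "B \<noteq> {}"
    "\<forall>a\<in>A. \<exists>b\<in>B. a \<le> b" "\<forall>b\<in>B. \<exists>a\<in>A. b \<le> a"
  shows "Max A = Max B"
proof -
  have "Max A \<le> Max B" using assms
    by (metis Max_ge Max_in order_trans)
  moreover have "Max B \<le> Max A" using assms
    by (metis Max_ge Max_in order_trans)
  ultimately show ?thesis by simp
qed

definition cst :: "real list \<Rightarrow> real list \<Rightarrow> (nat \<times> nat) list \<Rightarrow> real" where
  "cst x y T = Max ((\<lambda>(i, j). \<bar>x ! i - y ! j\<bar>) ` set T)"

lemma cst_eq: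
  assumes "traversal (length x) l T" "length y = l"
  shows "cst x y T = Max ((\<lambda>j. max \<bar>Min (sector x T j) - y!j\<bar> \<bar>Max (sector x T j) - y!j\<bar>) ` {..<l})"
  unfolding cst_def
proof (rule Max_eq_dom)
  have "T \<noteq> []" using assms unfolding traversal_def by auto
  then show "(\<lambda>(i, j). \<bar>x ! i - y ! j\<bar>) ` set T \<noteq> {}" by simp
  obtain i j where "(i,j) \<in> set T" using \<open>T \<noteq> []\<close> by (metis last_in_set surj_pair)
  then have "0 < l" using trav_bounds(2)[OF assms(1)] by (metis gr_zeroI not_less_zero)
  then show "(\<lambda>j. max \<bar>Min (sector x T j) - y!j\<bar> \<bar>Max (sector x T j) - y!j\<bar>) ` {..<l} \<noteq> {}" by auto
  show "finite ((\<lambda>(i, j). \<bar>x ! i - y ! j\<bar>) ` set T)" by simp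
  show "finite ((\<lambda>j. max \<bar>Min (sector x T j) - y!j\<bar> \<bar>Max (sector x T j) - y!j\<bar>) ` {..<l})" by simp
  show "\<forall>a\<in>(\<lambda>(i, j). \<bar>x ! i - y ! j\<bar>) ` set T. \<exists>b\<in>(\<lambda>j. max \<bar>Min (sector x T j) - y!j\<bar> \<bar>Max (sector x T j) - y!j\<bar>) ` {..<l}. a \<le> b"
  proof
    fix a assume "a \<in> (\<lambda>(i, j). \<bar>x ! i - y ! j\<bar>) ` set T"
    then obtain i j where ij: "(i,j) \<in> set T" "a = \<bar>x ! i - y ! j\<bar>" by auto
    have jl: "j < l" using trav_bounds[OF assms(1) ij(1)] by auto
    have mem: "x ! i \<in> sector x T j" using ij unfolding sector_def by auto
    have "Min (sector x T j) \<le> x!i" "x!i \<le> Max (sector x T j)"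
      using mem sector_props[OF assms(1) jl] by auto
    then have "a \<le> max \<bar>Min (sector x T j) - y!j\<bar> \<bar>Max (sector x T j) - y!j\<bar>"
      using ij(2) by linarith
    then show "\<exists>b\<in>(\<lambda>j. max \<bar>Min (sector x T j) - y!j\<bar> \<bar>Max (sector x T j) - y!j\<bar>) ` {..<l}. a \<le> b"
      using jl by blast
  qed
  show "\<forall>b\<in>(\<lambda>j. max \<bar>Min (sector x T j) - y!j\<bar> \<bar>Max (sector x T j) - y!j\<bar>) ` {..<l}. \<exists>a\<in>(\<lambda>(i, j). \<bar>x ! i - y ! j\<bar>) ` set T. b \<le> a"
  proof
    fix b assume "b \<in> (\<lambda>j. max \<bar>Min (sector x T j) - y!j\<bar> \<bar>Max (sector x T j) - y!j\<bar>) ` {..<l}"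
    then obtain j where j: "j < l" "b = max \<bar>Min (sector x T j) - y!j\<bar> \<bar>Max (sector x T j) - y!j\<bar>" by auto
    have "Min (sector x T j) \<in> sector x T j" "Max (sector x T j) \<in> sector x T j"
      using sector_props[OF assms(1) j(1)] by auto
    then obtain i1 i2 where "(i1,j) \<in> set T" "x!i1 = Min (sector x T j)"
      "(i2,j) \<in> set T" "x!i2 = Max (sector x T j)" unfolding sector_def by auto
    then show "\<exists>a\<in>(\<lambda>(i, j). \<bar>x ! i - y ! j\<bar>) ` set T. b \<le> a"
      using j(2) by (metis (no_types, lifting) case_prod_conv image_eqI max_def order_refl)
  qed
qed

lemma rank_inj:
  assumes "z \<in> set x" "z' \<in> set x" "rank x z = rank x z'"
  shows "z = z'"
proof (rule ccontr)
  assume "z \<noteq> z'"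
  then consider "z < z'" | "z' < z" by linarith
  then show False
  proof cases
    case 1
    have "{w \<in> set x. w \<le> z} \<subset> {w \<in> set x. w \<le> z'}" using 1 assms by force
    then have "card {w \<in> set x. w \<le> z} < card {w \<in> set x. w \<le> z'}"
      by (intro psubset_card_mono) auto
    then show False using assms(3) unfolding rank_def by simp
  next
    case 2
    have "{w \<in> set x. w \<le> z'} \<subset> {w \<in> set x. w \<le> z}" using 2 assms by force
    then have "card {w \<in> set x. w \<le> z'} < card {w \<in> set x. w \<le> z}"
      by (intro psubset_card_mono) auto
    then show False using assms(3) unfolding rank_def by simp
  qed
qed

lemma cst_transfer:
  assumes se: "set x = set x'" and ly: "length y = l"
    and T: "traversal (length x) l T" and T': "traversal (length x') l T'"
    and pe: "profile x l T = profile x' l T'"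
  shows "cst x y T = cst x' y T'"
proof -
  have rk: "rank x = rank x'" using se unfolding rank_def by (simp add: fun_eq_iff)
  have eq: "Min (sector x T j) = Min (sector x' T' j) \<and> Max (sector x T j) = Max (sector x' T' j)"
    if j: "j < l" for j
  proof -
    have "profile x l T ! j = profile x' l T' ! j" using pe by simp
    then have r1: "rank x (Min (sector x T j)) = rank x (Min (sector x' T' j))"
      and r2: "rank x (Max (sector x T j)) = rank x (Max (sector x' T' j))"
      using j rk unfolding profile_def by auto
    note p = sector_props[OF T j] and p' = sector_props[OF T' j]
    have "Min (sector x T j) \<in> set x" "Max (sector x T j) \<in> set x"
      using p Min_in Max_in by blast+
    moreover have "Min (sector x' T' j) \<in> set x" "Max (sector x' T' j) \<in> set x"
      using p' se Min_in Max_in by blast+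
    ultimately show ?thesis using rank_inj r1 r2 by blast
  qed
  show ?thesis
    unfolding cst_eq[OF T ly] cst_eq[OF T' ly]
    by (rule arg_cong[where f=Max], rule image_cong) (use eq in auto)
qed

lemma cst_sub:
  assumes se: "set x = set x'" and pe: "profiles x l = profiles x' l" and ly: "length y = l"
  shows "{cst x y T | T. traversal (length x) l T} \<subseteq> {cst x' y T | T. traversal (length x') l T}"
proof
  fix c assume "c \<in> {cst x y T | T. traversal (length x) l T}"
  then obtain T where T: "traversal (length x) l T" "c = cst x y T" by auto
  have "profile x l T \<in> profiles x' l" using T pe unfolding profiles_def by blast
  then obtain T' where T': "traversal (length x') l T'" "profile x l T = profile x' l T'"
    unfolding profiles_def by auto
  show "c \<in> {cst x' y T | T. traversal (length x') l T}"
    using cst_transfer[OF se ly T(1) T'(1) T'(2)] T T' by auto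
qed

theorem lemma4p4:
  fixes x x' y :: "real list" and l :: nat
  assumes "set x = set x'"
    and "profiles x l = profiles x' l"
    and "length y = l"
  shows "dF x y = dF x' y"
proof -
  have "{cst x y T | T. traversal (length x) l T} = {cst x' y T | T. traversal (length x') l T}"
    using cst_sub[OF assms] cst_sub[OF assms(1)[symmetric] assms(2)[symmetric] assms(3)] by blast
  then show ?thesis unfolding dF_def cst_def[symmetric] using assms(3) by simp
qed

end
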